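(* An element $f\in C(X)_\mathcal{P}$ is clean (i.e. $f=u+e$ with $u$ a unit and $e$ an idempotent of $C(X)_\mathcal{P}$) if and only if there exists a $\tau\mathcal{P}$-clopen subset $U$ of $X$ such that $f^{-1}(\{1\})\subseteq U\subseteq X\setminus Z_\mathcal{P}(f)$.
   Context: Let $(X,\tau)$ be a $T_1$ topological space and $\mathcal{P}$ an ideal of closed subsets of $X$ (a nonempty family of closed sets closed under finite unions and under taking closed subsets). For $f\colon X\to\mathbb{R}$, $D_f$ denotes the set of points of discontinuity of $f$, and $C(X)_\mathcal{P}=\{f\colon X\to\mathbb{R} : \overline{D_f}\in\mathcal{P}\}$, a commutative ring with unity under pointwise operations. For $f\in C(X)_\mathcal{P}$, $Z_\mathcal{P}(f)=\{x: f(x)=0\}$. A set $U\subseteq X$ is $\tau\mathcal{P}$-clopen if $U=Z_\mathcal{P}(f)=X\setminus Z_\mathcal{P}(g)$ for some $f,g\in C(X)_\mathcal{P}$. *)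

theory Defs
  imports "HOL-Analysis.Analysis"
begin

text \<open>The T1 space X is the type 'a of class t1_space (X = UNIV).\<close>

definition closed_ideal :: "'a::topological_space set set \<Rightarrow> bool" where
  "closed_ideal P \<longleftrightarrow> P \<noteq> {} \<and> (\<forall>A\<in>P. closed A)
     \<and> (\<forall>A\<in>P. \<forall>B\<in>P. A \<union> B \<in> P)
     \<and> (\<forall>A\<in>P. \<forall>B. closed B \<and> B \<subseteq> A \<longrightarrow> B \<in> P)"

definition discont :: "('a::topological_space \<Rightarrow> real) \<Rightarrow> 'a set" where
  "discont f = {x. \<not> (f \<longlongrightarrow> f x) (at x)}"

definition CP :: "'a::topological_space set set \<Rightarrow> ('a \<Rightarrow> real) set" where
  "CP P = {f. closure (discont f) \<in> P}"

definition ZP :: "('a \<Rightarrow> real) \<Rightarrow> 'a set" where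
  "ZP f = {x. f x = 0}"

definition tauP_clopen :: "'a::topological_space set set \<Rightarrow> 'a set \<Rightarrow> bool" where
  "tauP_clopen P U \<longleftrightarrow> (\<exists>f\<in>CP P. \<exists>g\<in>CP P. U = ZP f \<and> U = UNIV - ZP g)"

definition CP_unit :: "'a::topological_space set set \<Rightarrow> ('a \<Rightarrow> real) \<Rightarrow> bool" where
  "CP_unit P u \<longleftrightarrow> u \<in> CP P \<and> (\<exists>v\<in>CP P. (\<lambda>x. u x * v x) = (\<lambda>x. 1))"

definition CP_idempotent :: "'a::topological_space set set \<Rightarrow> ('a \<Rightarrow> real) \<Rightarrow> bool" where
  "CP_idempotent P e \<longleftrightarrow> e \<in> CP P \<and> (\<lambda>x. e x * e x) = e"

definition CP_clean :: "'a::topological_space set set \<Rightarrow> ('a \<Rightarrow> real) \<Rightarrow> bool" where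
  "CP_clean P f \<longleftrightarrow> (\<exists>u e. CP_unit P u \<and> CP_idempotent P e \<and> f = (\<lambda>x. u x + e x))"

end

theory Submission
  imports Defs
begin

lemma CP_sub:
  assumes P: "closed_ideal P" and a: "a \<in> CP P" and b: "b \<in> CP P"
    and sub: "discont c \<subseteq> discont a \<union> discont b"
  shows "c \<in> CP P"
proof -
  have "closure (discont c) \<subseteq> closure (discont a) \<union> closure (discont b)"
    using sub closure_mono closure_Un by (metis)
  moreover have "closure (discont a) \<union> closure (discont b) \<in> P"
    using P a b unfolding closed_ideal_def CP_def by blast
  ultimately show ?thesis using P unfolding closed_ideal_def CP_def by blast
qed

lemma discont_diff: "discont (\<lambda>x. f x - e x) \<subseteq> discont f \<union> discont e"
  unfolding discont_def by (auto intro: tendsto_diff)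

lemma discont_inv: assumes "\<And>x. u x \<noteq> 0"
  shows "discont (\<lambda>x. inverse (u x)) \<subseteq> discont u"
  unfolding discont_def using assms by (auto intro: tendsto_inverse)

lemma discont_ind:
  assumes "U = ZP g" "U = UNIV - ZP h"
  shows "discont (\<lambda>x. if x \<in> U then 0 else (1::real)) \<subseteq> discont g \<union> discont h"
proof
  fix x assume x: "x \<in> discont (\<lambda>x. if x \<in> U then 0 else (1::real))"
  show "x \<in> discont g \<union> discont h"
  proof (rule ccontr)
    assume "x \<notin> discont g \<union> discont h"
    hence g: "(g \<longlongrightarrow> g x) (at x)" and h: "(h \<longlongrightarrow> h x) (at x)" unfolding discont_def by auto
    show False
    proof (cases "x \<in> U")
      case True
      hence "h x \<noteq> 0" using assms by (auto simp: ZP_def)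
      hence "eventually (\<lambda>y. h y \<noteq> 0) (at x)" using h tendsto_imp_eventually_ne by blast
      hence "eventually (\<lambda>y. (if y \<in> U then 0 else (1::real)) = 0) (at x)"
        by (rule eventually_mono) (use assms in \<open>auto simp: ZP_def\<close>)
      hence "((\<lambda>y. if y \<in> U then 0 else (1::real)) \<longlongrightarrow> 0) (at x)"
        by (rule tendsto_eventually)
      thus False using x True unfolding discont_def by auto
    next
      case False
      hence "g x \<noteq> 0" using assms by (auto simp: ZP_def)
      hence "eventually (\<lambda>y. g y \<noteq> 0) (at x)" using g tendsto_imp_eventually_ne by blast
      hence "eventually (\<lambda>y. (if y \<in> U then 0 else (1::real)) = 1) (at x)"
        by (rule eventually_mono) (use assms in \<open>auto simp: ZP_def\<close>)
      hence "((\<lambda>y. if y \<in> U then 0 else (1::real)) \<longlongrightarrow> 1) (at x)"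
        by (rule tendsto_eventually)
      thus False using x False unfolding discont_def by auto
    qed
  qed
qed

theorem theorem3p4:
  fixes P :: "'a::t1_space set set" and f :: "'a \<Rightarrow> real"
  assumes "closed_ideal P" and "f \<in> CP P"
  shows "CP_clean P f \<longleftrightarrow>
    (\<exists>U. tauP_clopen P U \<and> f -` {1} \<subseteq> U \<and> U \<subseteq> UNIV - ZP f)"
proof
  assume "CP_clean P f"
  then obtain u e where u: "CP_unit P u" and e: "CP_idempotent P e" and f: "f = (\<lambda>x. u x + e x)"
    unfolding CP_clean_def by blast
  have ecp: "e \<in> CP P" using e unfolding CP_idempotent_def by blast
  have e01: "e x = 0 \<or> e x = 1" for x
  proof -
    have "e x * e x = e x" using e unfolding CP_idempotent_def by metis
    thus ?thesis by (metis mult_cancel_right1 mult_zero_left)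
  qed
  have un: "u x \<noteq> 0" for x
  proof -
    obtain v where "(\<lambda>x. u x * v x) = (\<lambda>x. 1)" using u unfolding CP_unit_def by blast
    hence "u x * v x = 1" by metis
    thus ?thesis by auto
  qed
  have c1: "(\<lambda>x. 1 - e x) \<in> CP P"
    by (rule CP_sub[OF assms(1) ecp ecp]) (unfold discont_def, auto intro: tendsto_diff)
  have "tauP_clopen P (ZP e)"
    unfolding tauP_clopen_def
    apply (rule bexI[of _ e], rule bexI[of _ "\<lambda>x. 1 - e x"])
    using e01 c1 ecp by (auto simp: ZP_def)
  moreover have "f -` {1} \<subseteq> ZP e" using e01 un f by (force simp: ZP_def)
  moreover have "ZP e \<subseteq> UNIV - ZP f" using un f by (auto simp: ZP_def)
  ultimately show "\<exists>U. tauP_clopen P U \<and> f -` {1} \<subseteq> U \<and> U \<subseteq> UNIV - ZP f" by blast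
next
  assume "\<exists>U. tauP_clopen P U \<and> f -` {1} \<subseteq> U \<and> U \<subseteq> UNIV - ZP f"
  then obtain U g h where g: "g \<in> CP P" and h: "h \<in> CP P" and Ug: "U = ZP g"
    and Uh: "U = UNIV - ZP h" and s1: "f -` {1} \<subseteq> U" and s2: "U \<subseteq> UNIV - ZP f"
    unfolding tauP_clopen_def by blast
  define e where "e = (\<lambda>x. if x \<in> U then 0 else (1::real))"
  define u where "u = (\<lambda>x. f x - e x)"
  have ecp: "e \<in> CP P" unfolding e_def
    by (rule CP_sub[OF assms(1) g h discont_ind[OF Ug Uh]])
  have ucp: "u \<in> CP P" unfolding u_def
    by (rule CP_sub[OF assms(1) assms(2) ecp discont_diff])
  have un: "u x \<noteq> 0" for x
    using s1 s2 unfolding u_def e_def ZP_def by (cases "x \<in> U") auto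
  have vcp: "(\<lambda>x. inverse (u x)) \<in> CP P"
    by (rule CP_sub[OF assms(1) ucp ucp]) (use discont_inv[of u, OF un] in auto)
  have "CP_unit P u" unfolding CP_unit_def
    using ucp vcp un by (intro conjI bexI[of _ "\<lambda>x. inverse (u x)"]) auto
  moreover have "CP_idempotent P e" unfolding CP_idempotent_def using ecp by (auto simp: e_def)
  moreover have "f = (\<lambda>x. u x + e x)" by (simp add: u_def)
  ultimately show "CP_clean P f" unfolding CP_clean_def by blast
qed

end
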